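(* Assume the set $\mathcal{F}:=\{x\in\mathbb{R}^n:\|Ax-b\|_2\le\epsilon,\ \|x\|_2\le d\}$ is nonempty. Let $(\lambda_k)_{k\in\mathbb{N}}$ be a decreasing sequence of positive numbers with $\lambda_k\to0$, and for each $k$ let $x^k$ be an optimal solution of $\min\{Q_{\lambda_k}(x):x\in\mathbb{R}^n\}$. Then: (i) $(x^k)$ is bounded; (ii) every accumulation point $x^\star$ of $(x^k)$ satisfies $x^\star\in D$ and $Ax^\star\in C$; (iii) every accumulation point $x^\star$ of $(x^k)$ is an optimal solution of $\min\{\|x\|_1/\|x\|_2: x\in\mathcal{F}\}$.
   Context: Let $A\in\mathbb{R}^{m\times n}$, $b\in\mathbb{R}^m$, $\epsilon\ge 0$ with $\|b\|_2>\epsilon$, and $d>0$. $C:=\{y\in\mathbb{R}^m:\|y-b\|_2\le\epsilon\}$, $D:=\{x\in\mathbb{R}^n:\|x\|_2\le d\}$, $\mathrm{env}(y):=\frac12\big((\|y-b\|_2-\epsilon)_+\big)^2$ for $y\in\mathbb{R}^m$. For $\lambda>0$, $Q_\lambda(x):=(\lambda\|x\|_1+\mathrm{env}(Ax))/\|x\|_2$ if $x\in D\setminus\{0_n\}$ and $Q_\lambda(x):=+\infty$ otherwise. *)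

theory Defs
  imports "HOL-Analysis.Analysis"
begin

definition l1norm :: "real^'n \<Rightarrow> real" where
  "l1norm x = (\<Sum>i\<in>UNIV. \<bar>x $ i\<bar>)"

definition env :: "real^'m \<Rightarrow> real \<Rightarrow> real^'m \<Rightarrow> real" where
  "env b \<epsilon> y = (1/2) * (max (norm (y - b) - \<epsilon>) 0)^2"

definition Qlam :: "real^'n^'m \<Rightarrow> real^'m \<Rightarrow> real \<Rightarrow> real \<Rightarrow> real \<Rightarrow> real^'n \<Rightarrow> ereal" where
  "Qlam A b \<epsilon> d lam x =
     (if norm x \<le> d \<and> x \<noteq> 0
      then ereal ((lam * l1norm x + env b \<epsilon> (A *v x)) / norm x)
      else \<infinity>)"

definition feasible :: "real^'n^'m \<Rightarrow> real^'m \<Rightarrow> real \<Rightarrow> real \<Rightarrow> (real^'n) set" where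
  "feasible A b \<epsilon> d = {x. norm (A *v x - b) \<le> \<epsilon> \<and> norm x \<le> d}"

end

theory Submission
  imports Defs
begin

lemma l1norm_nonneg: "l1norm x \<ge> 0"
  unfolding l1norm_def by (simp add: sum_nonneg)

lemma env_nonneg: "env b e y \<ge> 0"
  unfolding env_def by simp

lemma l1norm_tendsto: "f \<longlonglongrightarrow> l \<Longrightarrow> (\<lambda>k. l1norm (f k)) \<longlonglongrightarrow> l1norm l"
  unfolding l1norm_def by (intro tendsto_intros)

lemma env_tendsto: "f \<longlonglongrightarrow> l \<Longrightarrow> (\<lambda>k. env b e (A *v f k)) \<longlonglongrightarrow> env b e (A *v l)"
proof -
  assume "f \<longlonglongrightarrow> l"
  hence "(\<lambda>k. A *v f k) \<longlonglongrightarrow> A *v l"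
    using bounded_linear.tendsto[OF matrix_vector_mul_bounded_linear] by blast
  thus ?thesis unfolding env_def by (intro tendsto_intros)
qed

theorem mainTheorem3:
  fixes A :: "real^'n^'m" and b :: "real^'m" and \<epsilon> d :: real
    and lam :: "nat \<Rightarrow> real" and x :: "nat \<Rightarrow> real^'n"
  assumes "\<epsilon> \<ge> 0" and "norm b > \<epsilon>" and "d > 0"
    and "feasible A b \<epsilon> d \<noteq> {}"
    and "decseq lam" and "\<And>k. lam k > 0" and "lam \<longlonglongrightarrow> 0"
    and "\<And>k y. Qlam A b \<epsilon> d (lam k) (x k) \<le> Qlam A b \<epsilon> d (lam k) y"
  shows "bounded (range x) \<and>
         (\<forall>xs r. strict_mono r \<and> (x \<circ> r) \<longlonglongrightarrow> xs \<longrightarrow>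
            norm xs \<le> d \<and> norm (A *v xs - b) \<le> \<epsilon>) \<and>
         (\<forall>xs r. strict_mono r \<and> (x \<circ> r) \<longlonglongrightarrow> xs \<longrightarrow>
            xs \<in> feasible A b \<epsilon> d \<and>
            (\<forall>y\<in>feasible A b \<epsilon> d. l1norm xs / norm xs \<le> l1norm y / norm y))"
proof -
  note Qd = Qlam_def
  have feas_nz: "y \<noteq> 0" if "y \<in> feasible A b \<epsilon> d" for y
    using that assms(2) by (auto simp: feasible_def)
  have Qfeas: "Qlam A b \<epsilon> d l y = ereal (l * l1norm y / norm y)"
    if "y \<in> feasible A b \<epsilon> d" for y l
  proof -
    have "env b \<epsilon> (A *v y) = 0" using that by (auto simp: feasible_def env_def)
    thus ?thesis using that feas_nz[OF that] by (auto simp: Qd feasible_def)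
  qed
  obtain y0 where y0: "y0 \<in> feasible A b \<epsilon> d" using assms(4) by blast
  have xk: "norm (x k) \<le> d \<and> x k \<noteq> 0 \<and>
     (lam k * l1norm (x k) + env b \<epsilon> (A *v x k)) / norm (x k) \<le> lam k * l1norm y / norm y"
    if "y \<in> feasible A b \<epsilon> d" for k y
  proof -
    have "Qlam A b \<epsilon> d (lam k) (x k) \<le> ereal (lam k * l1norm y / norm y)"
      using assms(8)[of k y] Qfeas[OF that] by simp
    thus ?thesis by (auto simp: Qd split: if_splits)
  qed
  have ratio: "l1norm (x k) / norm (x k) \<le> l1norm y / norm y"
    if "y \<in> feasible A b \<epsilon> d" for k y
  proof -
    have n: "norm (x k) > 0" using xk[OF that, of k] by auto
    have "lam k * (l1norm (x k) / norm (x k)) \<le>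
        (lam k * l1norm (x k) + env b \<epsilon> (A *v x k)) / norm (x k)"
      using n env_nonneg[of b \<epsilon> "A *v x k"] by (simp add: divide_right_mono)
    also have "\<dots> \<le> lam k * (l1norm y / norm y)" using xk[OF that, of k] by simp
    finally have "lam k * (l1norm (x k) / norm (x k)) \<le> lam k * (l1norm y / norm y)" .
    thus ?thesis using assms(6)[of k] mult_le_cancel_left_pos by blast
  qed
  define c where "c = l1norm y0 / norm y0"
  have c0: "c \<ge> 0" unfolding c_def using l1norm_nonneg[of y0] by simp
  have envb: "env b \<epsilon> (A *v x k) \<le> d * c * lam k" for k
  proof -
    have n: "norm (x k) > 0" and nd: "norm (x k) \<le> d" using xk[OF y0, of k] by auto
    have "env b \<epsilon> (A *v x k) / norm (x k) \<le>
        (lam k * l1norm (x k) + env b \<epsilon> (A *v x k)) / norm (x k)"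
      using n l1norm_nonneg[of "x k"] assms(6)[of k] by (simp add: divide_right_mono)
    also have "\<dots> \<le> lam k * c" using xk[OF y0, of k] by (simp add: c_def)
    finally have "env b \<epsilon> (A *v x k) \<le> norm (x k) * (lam k * c)"
      using n by (simp add: divide_le_eq mult.commute)
    also have "\<dots> \<le> d * (lam k * c)"
      using nd c0 assms(6)[of k] by (intro mult_right_mono) auto
    finally show ?thesis by (simp add: algebra_simps)
  qed
  have bnd: "bounded (range x)"
    unfolding bounded_iff using xk[OF y0] by blast
  have acc: "norm xs \<le> d \<and> norm (A *v xs - b) \<le> \<epsilon>"
    if r: "strict_mono r" and lim: "(x \<circ> r) \<longlonglongrightarrow> xs" for xs r
  proof
    show "norm xs \<le> d"
      using tendsto_norm[OF lim] xk[OF y0]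
      by (intro tendsto_upperbound[where F=sequentially]) (auto simp: o_def)
    have l1: "(\<lambda>k. env b \<epsilon> (A *v (x \<circ> r) k)) \<longlonglongrightarrow> env b \<epsilon> (A *v xs)"
      by (rule env_tendsto[OF lim])
    have l2: "(\<lambda>k. d * c * (lam \<circ> r) k) \<longlonglongrightarrow> d * c * 0"
      by (intro tendsto_intros LIMSEQ_subseq_LIMSEQ assms(7) r)
    have "env b \<epsilon> (A *v xs) \<le> 0"
      using tendsto_le[OF _ l2 l1] envb by (simp add: o_def)
    thus "norm (A *v xs - b) \<le> \<epsilon>"
      unfolding env_def by (simp add: max_def split: if_splits)
  qed
  have opt: "xs \<in> feasible A b \<epsilon> d \<and>
            (\<forall>y\<in>feasible A b \<epsilon> d. l1norm xs / norm xs \<le> l1norm y / norm y)"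
    if r: "strict_mono r" and lim: "(x \<circ> r) \<longlonglongrightarrow> xs" for xs r
  proof
    show F: "xs \<in> feasible A b \<epsilon> d" using acc[OF r lim] by (simp add: feasible_def)
    have nz: "norm xs \<noteq> 0" using feas_nz[OF F] by simp
    have lr: "(\<lambda>k. l1norm ((x \<circ> r) k) / norm ((x \<circ> r) k)) \<longlonglongrightarrow> l1norm xs / norm xs"
      by (intro tendsto_divide l1norm_tendsto tendsto_norm lim nz)
    show "\<forall>y\<in>feasible A b \<epsilon> d. l1norm xs / norm xs \<le> l1norm y / norm y"
    proof
      fix y assume "y \<in> feasible A b \<epsilon> d"
      thus "l1norm xs / norm xs \<le> l1norm y / norm y"
        using ratio lr by (intro tendsto_upperbound[OF lr]) auto
    qed
  qed
  show ?thesis using bnd acc opt by blast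
qed

end
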